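(* Let $\psi\in\mathcal C$, let $F_1,F_2:\mathbb R\to(0,\infty)$ be measurable with $I(F_1\circ\psi,\psi),I(F_2\circ\psi^*,\psi^* )\in(0,\infty)$, and assume $F_2\circ\psi^*\in\mathcal L_{\psi^*}$. Then for $p\in(0,\infty)$ and $f=e^{-\psi}$, $$G_{p,F_1,F_2}(\psi)\le[I(F_1\circ\psi,\psi)]^{\frac{n}{n+p}}[I(F_2\circ\psi^*,\psi^* )]^{\frac{p}{n+p}},\qquad G_p(f)\le[I(f)]^{\frac{n}{n+p}}[I(f^\circ)]^{\frac{p}{n+p}}.$$ For $p\in(-\infty,-n)\cup(-n,0)$ the same inequalities hold with $\le$ replaced by $\ge$.
   Context: $\mathcal C$ is the set of convex $\psi:\mathbb R^n\to\mathbb R\cup\{+\infty\}$ with domain of nonempty interior; $\psi^*(y)=\sup_x(\langle x,y\rangle-\psi(x))$; $\nabla^2\psi$ is the Alexandrov Hessian; $X_\psi=\{x:\psi(x)<\infty,\ \nabla^2\psi(x)\text{ exists and is invertible}\}$. $I(F\circ\psi,\psi)=\int_{X_\psi}F(\psi(x))dx$, $I(g,\psi^* )=\int_{X_{\psi^*}}g$; $\mathcal F^+_{\psi^*}$: integrable $g>0$ on $X_{\psi^*}$ with $0<I(g,\psi^* )<\infty$; $\mathcal L_{\psi^*}$: its log-concave members. For $-n\ne p\in\mathbb R$ and $g\in\mathcal F^+_{\psi^*}$, $V_{p,F_1,F_2}(\psi,g)=\int_{X_\psi}\big(\frac{F_2(\langle x,\nabla\psi(x)\rangle-\psi(x))}{g(\nabla\psi(x))}\big)^{p/n}F_1(\psi(x))dx$.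 The general $L_p$ geominimal surface area is $G_{p,F_1,F_2}(\psi)=\inf_{g\in\mathcal L_{\psi^*}}\{V_{p,F_1,F_2}(\psi,g)^{\frac{n}{n+p}}I(g,\psi^* )^{\frac{p}{n+p}}\}$ for $p\ge0$, and the same with $\sup$ for $-n\ne p<0$. For $f=e^{-\psi}$: $G_p(f)=G_{p,e^{-t},e^{-t}}(\psi)$, $f^\circ=e^{-\psi^*}$, $I(f)=\int_{X_\psi}f$, $I(f^\circ)=\int_{X_{\psi^*}}f^\circ$ (assumed in $(0,\infty)$). Standing assumption: all integrals are well defined. *)

theory Defs
  imports "HOL-Analysis.Analysis"
begin

text \<open>Convex functions with values in R extended by +infinity are modelled as
  functions into ereal that never take the value -infinity.\<close>

definition effdom :: "('a::real_vector \<Rightarrow> ereal) \<Rightarrow> 'a set" where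
  "effdom psi = {x. psi x < \<infinity>}"

definition psi_r :: "('a \<Rightarrow> ereal) \<Rightarrow> 'a \<Rightarrow> real" where
  "psi_r psi x = real_of_ereal (psi x)"

definition convC :: "(real^'n \<Rightarrow> ereal) set" where
  "convC = {psi. (\<forall>x. psi x \<noteq> -\<infinity>) \<and> convex (effdom psi)
              \<and> convex_on (effdom psi) (psi_r psi) \<and> interior (effdom psi) \<noteq> {}}"

definition legendre :: "(real^'n \<Rightarrow> ereal) \<Rightarrow> real^'n \<Rightarrow> ereal" where
  "legendre psi y = (SUP x. ereal (x \<bullet> y) - psi x)"

definition grad :: "(real^'n \<Rightarrow> ereal) \<Rightarrow> real^'n \<Rightarrow> real^'n" where
  "grad psi x = (SOME v. (psi_r psi has_derivative (\<lambda>h. v \<bullet> h)) (at x))"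

definition alex_hessian :: "(real^'n \<Rightarrow> ereal) \<Rightarrow> real^'n \<Rightarrow> real^'n^'n \<Rightarrow> bool" where
  "alex_hessian psi x A \<longleftrightarrow> x \<in> interior (effdom psi) \<and> transpose A = A \<and>
     (\<exists>v. (psi_r psi has_derivative (\<lambda>h. v \<bullet> h)) (at x) \<and>
        ((\<lambda>h. (psi_r psi (x + h) - psi_r psi x - v \<bullet> h - (1/2) * (h \<bullet> (A *v h)))
               / (norm h)\<^sup>2) \<longlongrightarrow> 0) (at 0))"

definition Xset :: "(real^'n \<Rightarrow> ereal) \<Rightarrow> (real^'n) set" where
  "Xset psi = {x. psi x < \<infinity> \<and> (\<exists>A. alex_hessian psi x A \<and> invertible A)}"

definition Iint :: "(real^'n \<Rightarrow> real) \<Rightarrow> (real^'n \<Rightarrow> ereal) \<Rightarrow> real" where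
  "Iint g psi = (LINT x:Xset psi|lebesgue. g x)"

text \<open>"I(g,psi) is finite and positive": g integrable on X_psi with positive integral.\<close>
definition Ipos :: "(real^'n \<Rightarrow> real) \<Rightarrow> (real^'n \<Rightarrow> ereal) \<Rightarrow> bool" where
  "Ipos g psi \<longleftrightarrow> set_integrable lebesgue (Xset psi) g \<and> 0 < Iint g psi"

definition Fplus :: "(real^'n \<Rightarrow> ereal) \<Rightarrow> (real^'n \<Rightarrow> real) set" where
  "Fplus phi = {g. (\<forall>y\<in>Xset phi. 0 < g y) \<and> Ipos g phi}"

definition log_concave :: "('a::real_vector \<Rightarrow> real) \<Rightarrow> bool" where
  "log_concave h \<longleftrightarrow> (\<forall>x. 0 \<le> h x) \<and>
     (\<forall>x y t. 0 < t \<and> t < 1 \<longrightarrow> h x powr t * h y powr (1 - t) \<le> h (t *\<^sub>R x + (1 - t) *\<^sub>R y))"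

definition Lclass :: "(real^'n \<Rightarrow> ereal) \<Rightarrow> (real^'n \<Rightarrow> real) set" where
  "Lclass phi = {g. g \<in> Fplus phi \<and> (\<exists>h. log_concave h \<and> (\<forall>y\<in>Xset phi. h y = g y))}"

definition Vp :: "real \<Rightarrow> (real \<Rightarrow> real) \<Rightarrow> (real \<Rightarrow> real) \<Rightarrow> (real^'n \<Rightarrow> ereal)
                    \<Rightarrow> (real^'n \<Rightarrow> real) \<Rightarrow> real" where
  "Vp p F1 F2 psi g = (LINT x:Xset psi|lebesgue.
      (F2 (x \<bullet> grad psi x - psi_r psi x) / g (grad psi x)) powr (p / real CARD('n))
      * F1 (psi_r psi x))"

definition Ggen :: "real \<Rightarrow> (real \<Rightarrow> real) \<Rightarrow> (real \<Rightarrow> real) \<Rightarrow> (real^'n \<Rightarrow> ereal) \<Rightarrow> ereal" where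
  "Ggen p F1 F2 psi =
     (let n = real CARD('n);
          val = (\<lambda>g. ereal (Vp p F1 F2 psi g powr (n / (n + p))
                             * Iint g (legendre psi) powr (p / (n + p))))
      in if 0 \<le> p then (INF g\<in>Lclass (legendre psi). val g)
         else (SUP g\<in>Lclass (legendre psi). val g))"

text \<open>G_p(f) for f = exp(-psi).\<close>
definition Gp_f :: "real \<Rightarrow> (real^'n \<Rightarrow> ereal) \<Rightarrow> ereal" where
  "Gp_f p psi = Ggen p (\<lambda>t. exp (- t)) (\<lambda>t. exp (- t)) psi"

end

theory Submission
  imports Defs
begin


lemma tangent_ineq:
  fixes f :: "real^'n \<Rightarrow> real"
  assumes conv: "convex_on S f" and S: "convex S" and x: "x \<in> S" and z: "z \<in> S"
    and d: "(f has_derivative (\<lambda>h. v \<bullet> h)) (at x)"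
  shows "f x + v \<bullet> (z - x) \<le> f z"
proof -
  define g where "g = (\<lambda>t::real. f (x + t *\<^sub>R (z - x)))"
  have l: "((\<lambda>t. x + t *\<^sub>R (z - x)) has_derivative (\<lambda>t. t *\<^sub>R (z - x))) (at 0)"
    by (auto intro!: derivative_eq_intros)
  have d0: "(f has_derivative (\<lambda>h. v \<bullet> h)) (at ((\<lambda>t. x + t *\<^sub>R (z - x)) 0))"
    using d by simp
  have "(g has_derivative ((\<lambda>h. v \<bullet> h) \<circ> (\<lambda>t. t *\<^sub>R (z - x)))) (at 0)"
    using diff_chain_at[OF l d0] by (simp add: g_def o_def)
  moreover have "((\<lambda>h. v \<bullet> h) \<circ> (\<lambda>t. t *\<^sub>R (z - x))) = (*) (v \<bullet> (z - x))"
    by (auto simp: o_def inner_scaleR_right)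
  ultimately have "(g has_field_derivative (v \<bullet> (z - x))) (at 0)"
    by (simp add: has_field_derivative_def)
  hence "((\<lambda>h. (g (0 + h) - g 0) / h) \<longlongrightarrow> v \<bullet> (z - x)) (at 0)"
    by (simp add: DERIV_def)
  hence T: "((\<lambda>h. (g h - g 0) / h) \<longlongrightarrow> v \<bullet> (z - x)) (at_right 0)"
    by (auto intro: tendsto_mono[OF at_le])
  have ev: "\<forall>\<^sub>F t in at_right (0::real). t \<in> {0<..<1}"
    by (rule eventually_at_right_real) simp
  have E: "\<forall>\<^sub>F t in at_right 0. (g t - g 0) / t \<le> f z - f x"
    using ev
  proof eventually_elim
    case (elim t)
    hence t: "0 < t" "t < 1" by auto
    have "x + t *\<^sub>R (z - x) = (1 - t) *\<^sub>R x + t *\<^sub>R z" by (simp add: algebra_simps)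
    hence "g t \<le> (1 - t) * f x + t * f z"
      using convex_onD[OF conv, of t x z] t x z by (simp add: g_def)
    hence "g t - g 0 \<le> t * (f z - f x)" by (simp add: g_def algebra_simps)
    thus ?case using t by (simp add: divide_simps mult.commute)
  qed
  have "v \<bullet> (z - x) \<le> f z - f x"
    by (rule tendsto_upperbound[OF T E]) simp
  thus ?thesis by simp
qed

lemma legendre_grad:
  fixes psi :: "real^'n \<Rightarrow> ereal"
  assumes C: "psi \<in> convC" and x: "x \<in> Xset psi"
  shows "legendre psi (grad psi x) = ereal (x \<bullet> grad psi x - psi_r psi x)"
proof -
  from x obtain A where A: "alex_hessian psi x A" unfolding Xset_def by auto
  then obtain v where "(psi_r psi has_derivative (\<lambda>h. v \<bullet> h)) (at x)"
    unfolding alex_hessian_def by auto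
  hence dv: "(psi_r psi has_derivative (\<lambda>h. grad psi x \<bullet> h)) (at x)"
    unfolding grad_def by (rule someI)
  have xin: "x \<in> effdom psi" using x unfolding Xset_def effdom_def by auto
  have fin: "psi x = ereal (psi_r psi x)"
    using xin C unfolding effdom_def convC_def psi_r_def
    by (cases "psi x") auto
  have conv: "convex_on (effdom psi) (psi_r psi)" "convex (effdom psi)"
    using C unfolding convC_def by auto
  show ?thesis unfolding legendre_def
  proof (rule antisym)
    show "(SUP z. ereal (z \<bullet> grad psi x) - psi z) \<le> ereal (x \<bullet> grad psi x - psi_r psi x)"
    proof (rule SUP_least)
      fix z
      show "ereal (z \<bullet> grad psi x) - psi z \<le> ereal (x \<bullet> grad psi x - psi_r psi x)"
      proof (cases "z \<in> effdom psi")
        case True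
        have fz: "psi z = ereal (psi_r psi z)"
          using True C unfolding effdom_def convC_def psi_r_def
          by (cases "psi z") auto
        have "psi_r psi x + grad psi x \<bullet> (z - x) \<le> psi_r psi z"
          by (rule tangent_ineq[OF conv(1) conv(2) xin True dv])
        thus ?thesis using fz by (simp add: inner_diff_right inner_commute)
      next
        case False
        hence "psi z = \<infinity>" unfolding effdom_def by auto
        thus ?thesis by simp
      qed
    qed
  next
    show "ereal (x \<bullet> grad psi x - psi_r psi x) \<le> (SUP z. ereal (z \<bullet> grad psi x) - psi z)"
      by (rule SUP_upper2[of x]) (simp_all add: fin)
  qed
qed

lemma Vp_eq:
  fixes psi :: "real^'n \<Rightarrow> ereal"
  assumes C: "psi \<in> convC" and F2: "\<forall>t. 0 < F2 t"
  shows "Vp p F1 F2 psi (\<lambda>y. F2 (real_of_ereal (legendre psi y))) = Iint (\<lambda>x. F1 (psi_r psi x)) psi"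
  unfolding Vp_def Iint_def set_lebesgue_integral_def
proof (rule Bochner_Integration.integral_cong[OF refl])
  fix x
  show "indicator (Xset psi) x *\<^sub>R ((F2 (x \<bullet> grad psi x - psi_r psi x) /
           F2 (real_of_ereal (legendre psi (grad psi x)))) powr (p / real CARD('n)) * F1 (psi_r psi x))
        = indicator (Xset psi) x *\<^sub>R F1 (psi_r psi x)"
  proof (cases "x \<in> Xset psi")
    case True
    have "F2 (x \<bullet> grad psi x - psi_r psi x) / F2 (real_of_ereal (legendre psi (grad psi x))) = 1"
      using legendre_grad[OF C True] F2 by (simp add: less_imp_neq[symmetric])
    thus ?thesis by simp
  qed simp
qed

lemma general_bound:
  fixes psi :: "real^'n \<Rightarrow> ereal" and p :: real and F1 F2 :: "real \<Rightarrow> real"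
  assumes C: "psi \<in> convC" and F2: "\<forall>t. 0 < F2 t"
    and L: "(\<lambda>y. F2 (real_of_ereal (legendre psi y))) \<in> Lclass (legendre psi)"
  shows "(let n = real CARD('n);
            B = ereal (Iint (\<lambda>x. F1 (psi_r psi x)) psi powr (n / (n + p))
                 * Iint (\<lambda>y. F2 (real_of_ereal (legendre psi y))) (legendre psi) powr (p / (n + p)))
        in (0 < p \<longrightarrow> Ggen p F1 F2 psi \<le> B) \<and> (p < 0 \<longrightarrow> B \<le> Ggen p F1 F2 psi))"
proof -
  let ?g = "\<lambda>y. F2 (real_of_ereal (legendre psi y))"
  have V: "Vp p F1 F2 psi ?g = Iint (\<lambda>x. F1 (psi_r psi x)) psi" by (rule Vp_eq[OF C F2])
  show ?thesis unfolding Let_def Ggen_def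
    using V by (auto intro!: INF_lower2[OF L] SUP_upper2[OF L])
qed

lemma exp_legendre_L:
  fixes psi :: "real^'n \<Rightarrow> ereal"
  assumes C: "psi \<in> convC"
    and I: "Ipos (\<lambda>y. exp (- real_of_ereal (legendre psi y))) (legendre psi)"
  shows "(\<lambda>y. exp (- real_of_ereal (legendre psi y))) \<in> Lclass (legendre psi)"
proof -
  let ?L = "legendre psi"
  define h where "h y = (if ?L y < \<infinity> then exp (- real_of_ereal (?L y)) else 0)" for y
  from C have "interior (effdom psi) \<noteq> {}" unfolding convC_def by auto
  then obtain z0 where "z0 \<in> effdom psi" using interior_subset by blast
  then obtain c0 where c0: "psi z0 = ereal c0"
    using C unfolding effdom_def convC_def by (cases "psi z0") auto
  have lowb: "ereal (z0 \<bullet> w - c0) \<le> ?L w" for w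
    unfolding legendre_def by (rule SUP_upper2[of z0]) (simp_all add: c0)
  have cvx: "?L ((1 - t) *\<^sub>R a + t *\<^sub>R b) \<le> ereal ((1 - t) * ra + t * rb)"
    if t: "0 \<le> t" "t \<le> 1" and ra: "?L a = ereal ra" and rb: "?L b = ereal rb" for a b t ra rb
    unfolding legendre_def
  proof (rule SUP_least)
    fix z
    show "ereal (z \<bullet> ((1 - t) *\<^sub>R a + t *\<^sub>R b)) - psi z \<le> ereal ((1 - t) * ra + t * rb)"
    proof (cases "psi z")
      case (real c)
      have "ereal (z \<bullet> a) - psi z \<le> ?L a" unfolding legendre_def by (rule SUP_upper) simp
      hence 1: "z \<bullet> a - c \<le> ra" using ra real by simp
      have "ereal (z \<bullet> b) - psi z \<le> ?L b" unfolding legendre_def by (rule SUP_upper) simp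
      hence 2: "z \<bullet> b - c \<le> rb" using rb real by simp
      have "z \<bullet> ((1 - t) *\<^sub>R a + t *\<^sub>R b) - c = (1 - t) * (z \<bullet> a - c) + t * (z \<bullet> b - c)"
        by (simp add: inner_add_right inner_scaleR_right algebra_simps)
      also have "\<dots> \<le> (1 - t) * ra + t * rb"
        using 1 2 t by (intro add_mono mult_left_mono) auto
      finally show ?thesis using real by simp
    next
      case PInf thus ?thesis by simp
    next
      case MInf thus ?thesis using C unfolding convC_def by auto
    qed
  qed
  have lc: "log_concave h"
    unfolding log_concave_def
  proof (intro conjI allI impI)
    fix x show "0 \<le> h x" by (simp add: h_def)
  next
    fix x y t :: "real^'n" and s :: real
    fix t :: real
    assume t: "0 < t \<and> t < 1"
    show "h x powr t * h y powr (1 - t) \<le> h (t *\<^sub>R x + (1 - t) *\<^sub>R y)"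
    proof (cases "?L x < \<infinity> \<and> ?L y < \<infinity>")
      case True
      obtain rx where rx: "?L x = ereal rx"
        using True lowb[of x] by (cases "?L x") auto
      obtain ry where ry: "?L y = ereal ry"
        using True lowb[of y] by (cases "?L y") auto
      have "?L ((1 - (1 - t)) *\<^sub>R x + (1 - t) *\<^sub>R y) \<le> ereal ((1 - (1 - t)) * rx + (1 - t) * ry)"
        using t by (intro cvx[OF _ _ rx ry]) auto
      hence up: "?L (t *\<^sub>R x + (1 - t) *\<^sub>R y) \<le> ereal (t * rx + (1 - t) * ry)"
        by simp
      obtain rw where rw: "?L (t *\<^sub>R x + (1 - t) *\<^sub>R y) = ereal rw"
        using up lowb[of "t *\<^sub>R x + (1 - t) *\<^sub>R y"]
        by (cases "?L (t *\<^sub>R x + (1 - t) *\<^sub>R y)") auto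
      have rwle: "rw \<le> t * rx + (1 - t) * ry" using up rw by simp
      have "h x powr t * h y powr (1 - t) = exp (- rx) powr t * exp (- ry) powr (1 - t)"
        by (simp add: h_def rx ry)
      also have "\<dots> = exp (- (t * rx + (1 - t) * ry))"
        by (simp add: powr_def exp_add[symmetric] algebra_simps)
      also have "\<dots> \<le> exp (- rw)" using rwle by simp
      also have "\<dots> = h (t *\<^sub>R x + (1 - t) *\<^sub>R y)" by (simp add: h_def rw)
      finally show ?thesis .
    next
      case False
      hence "h x = 0 \<or> h y = 0" by (auto simp: h_def)
      thus ?thesis by (auto simp: h_def)
    qed
  qed
  show ?thesis
    unfolding Lclass_def Fplus_def
    using I lc by (auto intro!: exI[of _ h] simp: h_def Xset_def)
qed

theorem proposition2p2:
  fixes psi :: "real^'n \<Rightarrow> ereal" and p :: real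
  assumes "psi \<in> convC"
    and "p \<noteq> 0" and "p \<noteq> - real CARD('n)"
  shows
   "(\<forall>F1 F2 :: real \<Rightarrow> real.
       F1 \<in> borel_measurable borel \<and> F2 \<in> borel_measurable borel \<and>
       (\<forall>t. 0 < F1 t) \<and> (\<forall>t. 0 < F2 t) \<and>
       Ipos (\<lambda>x. F1 (psi_r psi x)) psi \<and>
       Ipos (\<lambda>y. F2 (real_of_ereal (legendre psi y))) (legendre psi) \<and>
       (\<lambda>y. F2 (real_of_ereal (legendre psi y))) \<in> Lclass (legendre psi)
     \<longrightarrow>
       (let n = real CARD('n);
            B = ereal (Iint (\<lambda>x. F1 (psi_r psi x)) psi powr (n / (n + p))
                 * Iint (\<lambda>y. F2 (real_of_ereal (legendre psi y))) (legendre psi) powr (p / (n + p)))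
        in (0 < p \<longrightarrow> Ggen p F1 F2 psi \<le> B) \<and> (p < 0 \<longrightarrow> B \<le> Ggen p F1 F2 psi)))
    \<and>
    (Ipos (\<lambda>x. exp (- psi_r psi x)) psi \<and>
     Ipos (\<lambda>y. exp (- real_of_ereal (legendre psi y))) (legendre psi)
     \<longrightarrow>
       (let n = real CARD('n);
            B = ereal (Iint (\<lambda>x. exp (- psi_r psi x)) psi powr (n / (n + p))
                 * Iint (\<lambda>y. exp (- real_of_ereal (legendre psi y))) (legendre psi) powr (p / (n + p)))
        in (0 < p \<longrightarrow> Gp_f p psi \<le> B) \<and> (p < 0 \<longrightarrow> B \<le> Gp_f p psi)))"
proof (intro conjI allI impI)
  fix F1 F2 :: "real \<Rightarrow> real"
  assume H: "F1 \<in> borel_measurable borel \<and> F2 \<in> borel_measurable borel \<and>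
       (\<forall>t. 0 < F1 t) \<and> (\<forall>t. 0 < F2 t) \<and>
       Ipos (\<lambda>x. F1 (psi_r psi x)) psi \<and>
       Ipos (\<lambda>y. F2 (real_of_ereal (legendre psi y))) (legendre psi) \<and>
       (\<lambda>y. F2 (real_of_ereal (legendre psi y))) \<in> Lclass (legendre psi)"
  show "let n = real CARD('n);
            B = ereal (Iint (\<lambda>x. F1 (psi_r psi x)) psi powr (n / (n + p))
                 * Iint (\<lambda>y. F2 (real_of_ereal (legendre psi y))) (legendre psi) powr (p / (n + p)))
        in (0 < p \<longrightarrow> Ggen p F1 F2 psi \<le> B) \<and> (p < 0 \<longrightarrow> B \<le> Ggen p F1 F2 psi)"
    using general_bound[OF assms(1)] H by blast
next
  assume H: "Ipos (\<lambda>x. exp (- psi_r psi x)) psi \<and>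
     Ipos (\<lambda>y. exp (- real_of_ereal (legendre psi y))) (legendre psi)"
  have L: "(\<lambda>y. exp (- real_of_ereal (legendre psi y))) \<in> Lclass (legendre psi)"
    using exp_legendre_L[OF assms(1)] H by blast
  show "let n = real CARD('n);
            B = ereal (Iint (\<lambda>x. exp (- psi_r psi x)) psi powr (n / (n + p))
                 * Iint (\<lambda>y. exp (- real_of_ereal (legendre psi y))) (legendre psi) powr (p / (n + p)))
        in (0 < p \<longrightarrow> Gp_f p psi \<le> B) \<and> (p < 0 \<longrightarrow> B \<le> Gp_f p psi)"
    unfolding Gp_f_def
    using general_bound[OF assms(1), where ?F1.0="\<lambda>t. exp (- t)" and p=p and ?F2.0="\<lambda>t. exp (- t)"] L by simp
qed

end
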